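(* Let $q=q_n$ be the transpose top with random measure on $S_n$ and $u=u_n$ the uniform measure on $S_n$. For any sequence of nonnegative integers $(k_n)$ such that $(k_n-n\log n)/n\to-\infty$ as $n\to\infty$, we have $d_2(q^{(k_n)},u)\to\infty$ and $\|q^{(k_n)}-u\|_{TV}\to 1$ as $n\to\infty$.
   Context: The transpose top with random measure on $S_n$ is $q(\tau)=1/n$ if $\tau=(1,j)$, $1\le j\le n$ (with $(1,1)=e$), and $0$ otherwise. $q^{(k)}$ is the $k$-fold convolution power. $d_2(p,u)=\big(|G|\sum_{x\in G}|p(x)-u(x)|^2\big)^{1/2}$ and $\|p-u\|_{TV}=\sup_{A\subset G}(p(A)-u(A))$. *)

theory Defs
  imports "HOL-Analysis.Analysis" "HOL-Combinatorics.Transposition" "HOL-Combinatorics.Permutations"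
begin

text \<open>The symmetric group S_n, realised as the permutations of {1..n}.
  Probability measures on S_n are functions (nat => nat) => real, only their values on S_n matter.\<close>

definition Sym :: "nat \<Rightarrow> (nat \<Rightarrow> nat) set" where
  "Sym n = {p. p permutes {1..n}}"

definition ttr :: "nat \<Rightarrow> (nat \<Rightarrow> nat) \<Rightarrow> real" where
  "ttr n \<tau> = (if \<exists>j\<in>{1..n}. \<tau> = Transposition.transpose 1 j then 1 / real n else 0)"

definition unif :: "nat \<Rightarrow> (nat \<Rightarrow> nat) \<Rightarrow> real" where
  "unif n x = (if x \<in> Sym n then 1 / real (card (Sym n)) else 0)"

definition conv :: "nat \<Rightarrow> ((nat \<Rightarrow> nat) \<Rightarrow> real) \<Rightarrow> ((nat \<Rightarrow> nat) \<Rightarrow> real) \<Rightarrow> (nat \<Rightarrow> nat) \<Rightarrow> real" where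
  "conv n p r x = (\<Sum>y\<in>Sym n. p (x \<circ> inv y) * r y)"

fun conv_pow :: "nat \<Rightarrow> ((nat \<Rightarrow> nat) \<Rightarrow> real) \<Rightarrow> nat \<Rightarrow> (nat \<Rightarrow> nat) \<Rightarrow> real" where
  "conv_pow n p 0 = (\<lambda>x. if x = id then 1 else 0)"
| "conv_pow n p (Suc k) = conv n (conv_pow n p k) p"

definition d2 :: "nat \<Rightarrow> ((nat \<Rightarrow> nat) \<Rightarrow> real) \<Rightarrow> ((nat \<Rightarrow> nat) \<Rightarrow> real) \<Rightarrow> real" where
  "d2 n p u = sqrt (real (card (Sym n)) * (\<Sum>x\<in>Sym n. \<bar>p x - u x\<bar>^2))"

definition tv :: "nat \<Rightarrow> ((nat \<Rightarrow> nat) \<Rightarrow> real) \<Rightarrow> ((nat \<Rightarrow> nat) \<Rightarrow> real) \<Rightarrow> real" where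
  "tv n p u = (SUP A\<in>Pow (Sym n). (\<Sum>x\<in>A. p x) - (\<Sum>x\<in>A. u x))"

end

theory Submission
  imports Defs
begin

definition L :: "nat \<Rightarrow> nat \<Rightarrow> nat list set" where
  "L n k = {xs. set xs \<subseteq> {1..n} \<and> length xs = k}"

fun prodt :: "nat list \<Rightarrow> nat \<Rightarrow> nat" where
  "prodt [] = id"
| "prodt (j # js) = prodt js \<circ> Transposition.transpose 1 j"

lemma finite_L: "finite (L n k)"
  unfolding L_def by (rule finite_lists_length_eq) simp

lemma card_L: "card (L n k) = n ^ k"
  unfolding L_def by (subst card_lists_length_eq) auto

lemma sum_L_Suc:
  "sum f (L n (Suc k)) = (\<Sum>j\<in>{1..n}. \<Sum>xs\<in>L n k. f (j#xs))"
proof -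
  have e: "L n (Suc k) = (\<lambda>(xs, j). j#xs) ` (L n k \<times> {1..n})"
    unfolding L_def by (rule lists_length_Suc_eq)
  have i: "inj_on (\<lambda>(xs, j::nat). j#xs) (L n k \<times> {1..n})"
    by (auto simp: inj_on_def)
  have "sum f (L n (Suc k)) = (\<Sum>(xs,j)\<in>L n k \<times> {1..n}. f (j#xs))"
    unfolding e by (subst sum.reindex[OF i]) (simp add: case_prod_unfold)
  also have "\<dots> = (\<Sum>xs\<in>L n k. \<Sum>j\<in>{1..n}. f (j#xs))"
    by (rule sum.cartesian_product[symmetric])
  also have "\<dots> = (\<Sum>j\<in>{1..n}. \<Sum>xs\<in>L n k. f (j#xs))"
    by (rule sum.swap)
  finally show ?thesis .
qed

lemma transp_Sym: "j \<in> {1..n} \<Longrightarrow> Transposition.transpose 1 j \<in> Sym n"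
  unfolding Sym_def by (auto intro!: permutes_swap_id)

lemma conv_ttr:
  assumes "n \<ge> 1"
  shows "conv n p (ttr n) x = (\<Sum>j\<in>{1..n}. p (x \<circ> Transposition.transpose 1 j)) / real n"
proof -
  let ?t = "\<lambda>j. Transposition.transpose (1::nat) j"
  define T where "T = ?t ` {1..n}"
  have TS: "T \<subseteq> Sym n" unfolding T_def using transp_Sym by auto
  have fin: "finite (Sym n)" unfolding Sym_def
    by (rule finite_permutations) simp
  have inj: "inj_on ?t {1..n}"
  proof (rule inj_onI)
    fix a b assume "?t a = ?t b" "a \<in> {1..n}" "b \<in> {1..n}"
    then have "?t a 1 = ?t b 1" by simp
    then show "a = b" by simp
  qed
  have "conv n p (ttr n) x = (\<Sum>y\<in>T. p (x \<circ> inv y) * ttr n y)"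
    unfolding conv_def
    by (rule sum.mono_neutral_right[OF fin TS]) (auto simp: ttr_def T_def)
  also have "\<dots> = (\<Sum>j\<in>{1..n}. p (x \<circ> inv (?t j)) * ttr n (?t j))"
    unfolding T_def by (subst sum.reindex[OF inj]) (simp only: o_def)
  also have "\<dots> = (\<Sum>j\<in>{1..n}. p (x \<circ> ?t j) / real n)"
    by (rule sum.cong) (auto simp: ttr_def)
  finally show ?thesis by (simp add: sum_divide_distrib)
qed

lemma prodt_comp_iff:
  "(prodt xs \<circ> Transposition.transpose 1 j = x) = (prodt xs = x \<circ> Transposition.transpose 1 j)"
proof
  assume h: "prodt xs \<circ> Transposition.transpose 1 j = x"
  have "prodt xs = prodt xs \<circ> (Transposition.transpose 1 j \<circ> Transposition.transpose 1 j)" by simp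
  also have "\<dots> = x \<circ> Transposition.transpose 1 j" by (simp only: o_assoc h)
  finally show "prodt xs = x \<circ> Transposition.transpose 1 j" .
next
  assume h: "prodt xs = x \<circ> Transposition.transpose 1 j"
  have "prodt xs \<circ> Transposition.transpose 1 j = x \<circ> (Transposition.transpose 1 j \<circ> Transposition.transpose 1 j)"
    by (simp only: o_assoc h)
  also have "\<dots> = x" by simp
  finally show "prodt xs \<circ> Transposition.transpose 1 j = x" .
qed

lemma conv_rep:
  assumes "n \<ge> 1"
  shows "conv_pow n (ttr n) k x = (\<Sum>xs\<in>L n k. if prodt xs = x then 1 else 0) / real n ^ k"
proof (induction k arbitrary: x)
  case 0
  have L0: "L n 0 = {[]}" unfolding L_def by auto
  show ?case by (simp add: L0 id_def eq_commute[of x])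
next
  case (Suc k)
  have "conv_pow n (ttr n) (Suc k) x
     = (\<Sum>j\<in>{1..n}. conv_pow n (ttr n) k (x \<circ> Transposition.transpose 1 j)) / real n"
    by (simp only: conv_pow.simps conv_ttr[OF assms])
  also have "\<dots> = (\<Sum>j\<in>{1..n}. (\<Sum>xs\<in>L n k. if prodt xs = x \<circ> Transposition.transpose 1 j then 1 else 0) / real n ^ k) / real n"
    by (simp only: Suc.IH)
  also have "\<dots> = (\<Sum>j\<in>{1..n}. \<Sum>xs\<in>L n k. if prodt (j#xs) = x then 1 else 0) / real n ^ Suc k"
  proof -
    have "(\<Sum>j\<in>{1..n}. (\<Sum>xs\<in>L n k. if prodt xs = x \<circ> Transposition.transpose 1 j then 1 else 0) / real n ^ k)
        = (\<Sum>j\<in>{1..n}. \<Sum>xs\<in>L n k. if prodt (j#xs) = x then 1 else 0) / real n ^ k"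
      by (simp only: prodt.simps prodt_comp_iff sum_divide_distrib)
    then show ?thesis by (simp only: divide_divide_eq_left power_Suc2)
  qed
  also have "\<dots> = (\<Sum>xs\<in>L n (Suc k). if prodt xs = x then 1 else 0) / real n ^ Suc k"
    by (simp only: sum_L_Suc)
  finally show ?case .
qed

lemma sum_ind: "finite A \<Longrightarrow> (\<Sum>x\<in>A. if P x then 1 else 0::real) = real (card {x\<in>A. P x})"
  by (simp add: sum.inter_filter[symmetric])

lemma card_miss1:
  assumes "j \<in> {1..n}"
  shows "card {xs\<in>L n k. j \<notin> set xs} = (n-1)^k"
proof -
  have "{xs\<in>L n k. j \<notin> set xs} = {xs. set xs \<subseteq> {1..n}-{j} \<and> length xs = k}"
    unfolding L_def by auto
  also have "card \<dots> = card ({1..n}-{j}) ^ k" by (rule card_lists_length_eq) simp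
  finally show ?thesis using assms by simp
qed

lemma card_miss2:
  assumes "i \<in> {1..n}" "j \<in> {1..n}" "i \<noteq> j"
  shows "card {xs\<in>L n k. i \<notin> set xs \<and> j \<notin> set xs} = (n-2)^k"
proof -
  have "{xs\<in>L n k. i \<notin> set xs \<and> j \<notin> set xs} = {xs. set xs \<subseteq> {1..n}-{i,j} \<and> length xs = k}"
    unfolding L_def by auto
  also have "card \<dots> = card ({1..n}-{i,j}) ^ k" by (rule card_lists_length_eq) simp
  also have "card ({1..n}-{i,j}) = card {1..n} - card {i,j}"
    by (rule card_Diff_subset) (use assms in auto)
  also have "card {i,j} = 2" using assms(3) by simp
  finally show ?thesis by simp
qed

definition NN :: "nat \<Rightarrow> nat list \<Rightarrow> nat" where
  "NN n xs = card ({2..n} - set xs)"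

lemma NN_sum: "real (NN n xs) = (\<Sum>j\<in>{2..n}. if j \<notin> set xs then 1 else 0)"
proof -
  have "{2..n} - set xs = {j\<in>{2..n}. j \<notin> set xs}" by auto
  then show ?thesis unfolding NN_def by (simp add: sum_ind)
qed

lemma S1:
  "(\<Sum>xs\<in>L n k. real (NN n xs)) = real (n-1) * real (n-1)^k"
proof -
  have "(\<Sum>xs\<in>L n k. real (NN n xs)) = (\<Sum>j\<in>{2..n}. \<Sum>xs\<in>L n k. if j \<notin> set xs then 1 else 0)"
    unfolding NN_sum by (rule sum.swap)
  also have "\<dots> = (\<Sum>j\<in>{2..n}. real (n-1)^k)"
  proof (rule sum.cong[OF refl])
    fix j assume "j \<in> {2..n}"
    then have "j \<in> {1..n}" by simp
    then show "(\<Sum>xs\<in>L n k. if j \<notin> set xs then 1 else 0) = real (n-1)^k"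
      by (simp add: sum_ind finite_L card_miss1)
  qed
  also have "\<dots> = real (card {2..n}) * real (n-1)^k" by (rule sum_constant)
  also have "card {2..n} = n - 1" by simp
  finally show ?thesis .
qed

lemma S2:
  assumes "n \<ge> 2"
  shows "(\<Sum>xs\<in>L n k. real (NN n xs)^2) = real (n-1) * (real (n-1)^k + real (n-2) * real (n-2)^k)"
proof -
  have "(\<Sum>xs\<in>L n k. real (NN n xs)^2)
      = (\<Sum>xs\<in>L n k. \<Sum>i\<in>{2..n}. \<Sum>j\<in>{2..n}. if i \<notin> set xs \<and> j \<notin> set xs then 1 else 0)"
    unfolding NN_sum power2_eq_square sum_product
    by (rule sum.cong[OF refl]) (auto intro!: sum.cong)
  also have "\<dots> = (\<Sum>i\<in>{2..n}. \<Sum>j\<in>{2..n}. \<Sum>xs\<in>L n k. if i \<notin> set xs \<and> j \<notin> set xs then 1 else 0)"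
    by (simp add: sum.swap[of _ "L n k"])
  also have "\<dots> = (\<Sum>i\<in>{2..n}. real (n-1)^k + real (n-2) * real (n-2)^k)"
  proof (rule sum.cong[OF refl])
    fix i assume i: "i \<in> {2..n}"
    have "(\<Sum>j\<in>{2..n}. \<Sum>xs\<in>L n k. if i \<notin> set xs \<and> j \<notin> set xs then 1 else 0)
        = (\<Sum>xs\<in>L n k. if i \<notin> set xs \<and> i \<notin> set xs then 1 else 0)
          + (\<Sum>j\<in>{2..n}-{i}. \<Sum>xs\<in>L n k. if i \<notin> set xs \<and> j \<notin> set xs then 1 else (0::real))"
      using i by (subst sum.remove[of _ i]) auto
    also have "\<dots> = real (n-1)^k + (\<Sum>j\<in>{2..n}-{i}. real (n-2)^k)"
    proof -
      have a: "(\<Sum>xs\<in>L n k. if i \<notin> set xs \<and> i \<notin> set xs then 1 else 0) = real (n-1)^k"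
        using i by (simp add: sum_ind finite_L card_miss1)
      have b: "(\<Sum>j\<in>{2..n}-{i}. \<Sum>xs\<in>L n k. if i \<notin> set xs \<and> j \<notin> set xs then 1 else (0::real))
          = (\<Sum>j\<in>{2..n}-{i}. real (n-2)^k)"
      proof (rule sum.cong[OF refl])
        fix j assume j: "j \<in> {2..n}-{i}"
        then show "(\<Sum>xs\<in>L n k. if i \<notin> set xs \<and> j \<notin> set xs then 1 else (0::real)) = real (n-2)^k"
          using i by (simp add: sum_ind finite_L card_miss2)
      qed
      show ?thesis using a b by simp
    qed
    also have "(\<Sum>j\<in>{2..n}-{i}. real (n-2)^k) = real (card ({2..n}-{i})) * real (n-2)^k"
      by (rule sum_constant)
    also have "card ({2..n}-{i}) = n - 2" using i by simp
    finally show "(\<Sum>j\<in>{2..n}. \<Sum>xs\<in>L n k. if i \<notin> set xs \<and> j \<notin> set xs then 1 else 0)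
        = real (n-1)^k + real (n-2) * real (n-2)^k" .
  qed
  also have "\<dots> = real (card {2..n}) * (real (n-1)^k + real (n-2) * real (n-2)^k)"
    by (rule sum_constant)
  also have "card {2..n} = n - 1" by simp
  finally show ?thesis .
qed

lemma ineq_aux:
  fixes a :: real
  assumes "a \<ge> 1"
  shows "a * ((a-1) * (a-1)^k) * (a+1)^k \<le> a^(2*k+2)"
proof -
  have aa: "1 \<le> a*a" using mult_mono[OF assms assms] assms by simp
  have "((a-1)*(a+1))^k \<le> (a^2)^k"
    by (rule power_mono) (use assms aa in \<open>auto simp: algebra_simps power2_eq_square\<close>)
  moreover have "a * (a-1) \<le> a^2" using assms by (simp add: power2_eq_square algebra_simps)
  moreover have "0 \<le> ((a-1)*(a+1))^k" using assms by simp
  moreover have "0 \<le> a * (a-1)" using assms by simp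
  ultimately have "(a * (a-1)) * ((a-1)*(a+1))^k \<le> a^2 * (a^2)^k"
    by (intro mult_mono) auto
  also have "a^2 * (a^2)^k = a^(2*k+2)" by (simp add: power_mult[symmetric] power_add[symmetric])
  finally have f: "(a * (a-1)) * ((a-1)*(a+1))^k \<le> a^(2*k+2)" .
  have eq: "a*((a-1)*(a-1)^k)*(a+1)^k = (a*(a-1))*((a-1)*(a+1))^k"
    by (simp add: power_mult_distrib mult_ac)
  show ?thesis unfolding eq by (rule f)
qed

lemma alg:
  fixes a :: real
  assumes a1: "a \<ge> 1"
  shows "a * (a^k + (a-1)*(a-1)^k) - 2*(a^(Suc k) / (a+1)^k)*(a*a^k) + (a^(Suc k) / (a+1)^k)^2 * (a+1)^k
     \<le> (a^(Suc k) / (a+1)^k) * (a+1)^k"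
proof -
  define X where "X = a^(Suc k)"
  define D where "D = (a+1)^k"
  have D: "D > 0" unfolding D_def using a1 by simp
  have ek: "2*k+2 = Suc k + Suc k" by simp
  have XX: "a^(2*k+2) = X*X" unfolding X_def by (simp only: ek power_add)
  have t1: "a * (a^k + (a-1)*(a-1)^k) = X + a*((a-1)*(a-1)^k)" unfolding X_def by (simp add: algebra_simps)
  have t2: "2*(X / D)*(a*a^k) = 2*(X*X)/D" unfolding X_def by simp
  have t3: "(X/D)^2 * D = X*X/D" using D by (simp add: power2_eq_square)
  have t4: "(X/D)*D = X" using D by simp
  have i: "a*((a-1)*(a-1)^k) * D \<le> X*X" using ineq_aux[OF a1, of k] unfolding D_def XX .
  then have i2: "a*((a-1)*(a-1)^k) \<le> X*X/D" using D by (simp add: pos_le_divide_eq)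
  have "a * (a^k + (a-1)*(a-1)^k) - 2*(X / D)*(a*a^k) + (X/D)^2 * D \<le> (X/D)*D"
    unfolding t1 t2 t3 t4 using i2 by simp
  then show ?thesis unfolding X_def D_def .
qed

lemma variance_bound:
  fixes n k :: nat
  assumes "n \<ge> 2"
  defines "\<mu> \<equiv> real (n-1)^(Suc k) / real n^k"
  shows "(\<Sum>xs\<in>L n k. (real (NN n xs) - \<mu>)^2) \<le> \<mu> * real n^k"
proof -
  define a where "a = real (n-1)"
  have a1: "a \<ge> 1" using assms(1) unfolding a_def by simp
  have na: "real n = a + 1" "real (n-2) = a - 1" using assms(1) unfolding a_def by auto
  have npos: "real n ^ k > 0" using assms(1) by simp
  have cL: "(\<Sum>xs\<in>L n k. (1::real)) = real n ^ k" by (simp add: card_L)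
  have mu: "\<mu> = a^(Suc k) / (a+1)^k" unfolding \<mu>_def a_def using na by simp
  have "(\<Sum>xs\<in>L n k. (real (NN n xs) - \<mu>)^2)
      = (\<Sum>xs\<in>L n k. real (NN n xs)^2) - 2 * \<mu> * (\<Sum>xs\<in>L n k. real (NN n xs)) + \<mu>^2 * (\<Sum>xs\<in>L n k. 1)"
    by (simp add: power2_diff sum.distrib sum_subtractf sum_distrib_left algebra_simps)
  also have "\<dots> = a * (a^k + (a-1)*(a-1)^k) - 2*\<mu>*(a*a^k) + \<mu>^2 * (a+1)^k"
    using S1[of n k] S2[OF assms(1), of k] cL by (simp add: na a_def)
  also have "\<dots> \<le> \<mu> * real n^k"
    unfolding mu na(1) by (rule alg[OF a1])
  finally show ?thesis .
qed

lemma prodt_fix: "j \<notin> set xs \<Longrightarrow> j \<noteq> 1 \<Longrightarrow> prodt xs j = j"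
  by (induction xs) auto

lemma prodt_Sym: "n \<ge> 1 \<Longrightarrow> set xs \<subseteq> {1..n} \<Longrightarrow> prodt xs \<in> Sym n"
proof (induction xs)
  case Nil
  show ?case unfolding Sym_def by (simp only: mem_Collect_eq prodt.simps permutes_id)
next
  case (Cons i xs)
  then have p1: "prodt xs permutes {1..n}" and p2: "Transposition.transpose 1 i permutes {1..n}"
    by (auto simp: Sym_def intro!: permutes_swap_id)
  show ?case unfolding Sym_def mem_Collect_eq prodt.simps by (rule permutes_compose[OF p2 p1])
qed

lemma finite_Sym: "finite (Sym n)"
  unfolding Sym_def by (rule finite_permutations) simp

lemma card_Sym: "card (Sym n) = fact n"
  unfolding Sym_def by (rule card_permutations) simp_all

lemma pA:
  assumes "n \<ge> 1" "finite A"
  shows "(\<Sum>\<sigma>\<in>A. conv_pow n (ttr n) k \<sigma>) = real (card {xs\<in>L n k. prodt xs \<in> A}) / real n^k"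
proof -
  have "(\<Sum>\<sigma>\<in>A. conv_pow n (ttr n) k \<sigma>)
      = (\<Sum>\<sigma>\<in>A. \<Sum>xs\<in>L n k. if prodt xs = \<sigma> then 1 else 0) / real n^k"
    by (simp add: conv_rep[OF assms(1)] sum_divide_distrib)
  also have "(\<Sum>\<sigma>\<in>A. \<Sum>xs\<in>L n k. if prodt xs = \<sigma> then 1 else (0::real))
      = (\<Sum>xs\<in>L n k. \<Sum>\<sigma>\<in>A. if prodt xs = \<sigma> then 1 else 0)"
    by (rule sum.swap)
  also have "\<dots> = (\<Sum>xs\<in>L n k. if prodt xs \<in> A then 1 else 0)"
    using assms(2) by simp
  also have "\<dots> = real (card {xs\<in>L n k. prodt xs \<in> A})"
    by (rule sum_ind[OF finite_L])
  finally show ?thesis .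
qed

lemma pA_le1:
  assumes "n \<ge> 1" "finite A"
  shows "(\<Sum>\<sigma>\<in>A. conv_pow n (ttr n) k \<sigma>) \<le> 1"
proof -
  have "card {xs\<in>L n k. prodt xs \<in> A} \<le> card (L n k)"
    by (rule card_mono[OF finite_L]) auto
  then have "real (card {xs\<in>L n k. prodt xs \<in> A}) \<le> real n ^ k"
    by (metis card_L of_nat_le_iff of_nat_power)
  then show ?thesis using assms by (simp add: pA)
qed

lemma uA:
  assumes "A \<subseteq> Sym n"
  shows "(\<Sum>\<sigma>\<in>A. unif n \<sigma>) = real (card A) / fact n"
proof -
  have "(\<Sum>\<sigma>\<in>A. unif n \<sigma>) = (\<Sum>\<sigma>\<in>A. 1 / real (fact n))"
    by (rule sum.cong[OF refl]) (use assms in \<open>auto simp: unif_def card_Sym\<close>)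
  then show ?thesis by simp
qed

definition FF :: "nat \<Rightarrow> (nat \<Rightarrow> nat) \<Rightarrow> nat" where
  "FF n \<sigma> = card {j\<in>{1..n}. \<sigma> j = j}"

lemma fix_count:
  assumes "j \<in> {1..n}"
  shows "card {\<sigma>\<in>Sym n. \<sigma> j = j} = fact (n-1)"
proof -
  have "{\<sigma>\<in>Sym n. \<sigma> j = j} = {\<sigma>. \<sigma> permutes ({1..n}-{j})}"
  proof (intro set_eqI iffI)
    fix \<sigma> assume "\<sigma> \<in> {\<sigma>\<in>Sym n. \<sigma> j = j}"
    then have "\<sigma> permutes {1..n}" "\<sigma> j = j" by (auto simp: Sym_def)
    then show "\<sigma> \<in> {\<sigma>. \<sigma> permutes ({1..n}-{j})}"
      unfolding permutes_def by auto
  next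
    fix \<sigma> assume "\<sigma> \<in> {\<sigma>. \<sigma> permutes ({1..n}-{j})}"
    then have p: "\<sigma> permutes ({1..n}-{j})" by simp
    then have "\<sigma> permutes {1..n}" by (rule permutes_subset) auto
    moreover have "\<sigma> j = j" using p unfolding permutes_def by auto
    ultimately show "\<sigma> \<in> {\<sigma>\<in>Sym n. \<sigma> j = j}" by (simp add: Sym_def)
  qed
  also have "card \<dots> = fact (card ({1..n}-{j}))"
    by (rule card_permutations) simp_all
  also have "card ({1..n}-{j}) = n - 1" using assms by simp
  finally show ?thesis .
qed

lemma sum_FF:
  assumes "n \<ge> 1"
  shows "(\<Sum>\<sigma>\<in>Sym n. real (FF n \<sigma>)) = fact n"
proof -
  have "(\<Sum>\<sigma>\<in>Sym n. real (FF n \<sigma>)) = (\<Sum>\<sigma>\<in>Sym n. \<Sum>j\<in>{1..n}. if \<sigma> j = j then 1 else 0)"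
    unfolding FF_def by (simp add: sum_ind)
  also have "\<dots> = (\<Sum>j\<in>{1..n}. \<Sum>\<sigma>\<in>Sym n. if \<sigma> j = j then 1 else 0)"
    by (rule sum.swap)
  also have "\<dots> = (\<Sum>j\<in>{1..n}. real (fact (n-1)))"
    by (rule sum.cong[OF refl]) (simp add: sum_ind finite_Sym fix_count)
  also have "\<dots> = real n * fact (n-1)" by simp
  also have "\<dots> = fact n" using assms by (simp add: fact_reduce)
  finally show ?thesis .
qed

lemma markov:
  assumes "n \<ge> 1" "c > 0"
  shows "real (card {\<sigma>\<in>Sym n. c \<le> real (FF n \<sigma>)}) \<le> fact n / c"
proof -
  let ?A = "{\<sigma>\<in>Sym n. c \<le> real (FF n \<sigma>)}"
  have "c * real (card ?A) = (\<Sum>\<sigma>\<in>?A. c)" by simp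
  also have "\<dots> \<le> (\<Sum>\<sigma>\<in>?A. real (FF n \<sigma>))" by (rule sum_mono) simp
  also have "\<dots> \<le> (\<Sum>\<sigma>\<in>Sym n. real (FF n \<sigma>))"
    by (rule sum_mono2[OF finite_Sym]) auto
  also have "\<dots> = fact n" by (rule sum_FF[OF assms(1)])
  finally show ?thesis using assms(2) by (simp add: pos_le_divide_eq mult.commute)
qed

lemma key:
  fixes n k :: nat
  assumes n2: "n \<ge> 2"
  defines "\<mu> \<equiv> real (n-1)^(Suc k) / real n^k"
  assumes mu12: "\<mu> \<ge> 12"
  shows "1 - 6/\<mu> \<le> tv n (conv_pow n (ttr n) k) (unif n)
       \<and> tv n (conv_pow n (ttr n) k) (unif n) \<le> 1
       \<and> sqrt (\<mu>/8) \<le> d2 n (conv_pow n (ttr n) k) (unif n)"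
proof -
  let ?P = "conv_pow n (ttr n) k"
  let ?U = "unif n"
  have n1: "n \<ge> 1" using n2 by simp
  have mpos: "\<mu> > 0" using mu12 by simp
  have npos: "real n ^ k > 0" using n1 by simp
  define A where "A = {\<sigma>\<in>Sym n. \<mu>/2 \<le> real (FF n \<sigma>)}"
  have AS: "A \<subseteq> Sym n" unfolding A_def by auto
  have finA: "finite A" using AS finite_Sym finite_subset by blast
  define bad where "bad = (\<Sum>xs\<in>L n k. if real (NN n xs) < \<mu>/2 then 1 else (0::real))"
  define good where "good = (\<Sum>xs\<in>L n k. if \<mu>/2 \<le> real (NN n xs) then 1 else (0::real))"
  have vb: "(\<Sum>xs\<in>L n k. (real (NN n xs) - \<mu>)^2) \<le> \<mu> * real n^k"
    unfolding \<mu>_def by (rule variance_bound[OF n2])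
  have pt: "(if real (NN n xs) < \<mu>/2 then 1 else 0) * (\<mu>/2)^2 \<le> (real (NN n xs) - \<mu>)^2" for xs
  proof (cases "real (NN n xs) < \<mu>/2")
    case True
    have "(\<mu>/2)^2 \<le> (\<mu> - real (NN n xs))^2"
      by (rule power_mono) (use True mpos in auto)
    then show ?thesis using True by (simp add: power2_commute)
  qed simp
  have "bad * (\<mu>/2)^2 = (\<Sum>xs\<in>L n k. (if real (NN n xs) < \<mu>/2 then 1 else 0) * (\<mu>/2)^2)"
    unfolding bad_def by (rule sum_distrib_right)
  also have "\<dots> \<le> (\<Sum>xs\<in>L n k. (real (NN n xs) - \<mu>)^2)"
    by (rule sum_mono) (rule pt)
  also have "\<dots> \<le> \<mu> * real n^k" by (rule vb)
  finally have b1: "bad * (\<mu>/2)^2 \<le> \<mu> * real n^k" .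
  have b2: "(bad * \<mu>) * \<mu> \<le> (4 * real n^k) * \<mu>"
    using b1 by (simp add: power2_eq_square algebra_simps)
  have b3: "bad * \<mu> \<le> 4 * real n^k"
    using b2 mpos by (simp only: mult_le_cancel_right_pos)
  have gb: "good + bad = real n ^ k"
  proof -
    have "good + bad = (\<Sum>xs\<in>L n k. (1::real))"
      unfolding good_def bad_def sum.distrib[symmetric]
      by (rule sum.cong[OF refl]) auto
    also have "\<dots> = real n ^ k" by (simp add: card_L)
    finally show ?thesis .
  qed
  have incl: "(if \<mu>/2 \<le> real (NN n xs) then 1 else 0) \<le> (if prodt xs \<in> A then 1 else (0::real))"
    if xs: "xs \<in> L n k" for xs
  proof (cases "\<mu>/2 \<le> real (NN n xs)")
    case True
    have sx: "set xs \<subseteq> {1..n}" using xs unfolding L_def by simp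
    have "{2..n} - set xs \<subseteq> {j\<in>{1..n}. prodt xs j = j}"
      using prodt_fix by auto
    then have "NN n xs \<le> FF n (prodt xs)"
      unfolding NN_def FF_def by (rule card_mono[rotated]) simp
    then have "prodt xs \<in> A" using True prodt_Sym[OF n1 sx] unfolding A_def by auto
    then show ?thesis by simp
  qed simp
  have pAeq: "(\<Sum>\<sigma>\<in>A. ?P \<sigma>) = (\<Sum>xs\<in>L n k. if prodt xs \<in> A then 1 else 0) / real n^k"
    using pA[OF n1 finA, of k] by (simp add: sum_ind finite_L)
  have "good \<le> (\<Sum>xs\<in>L n k. if prodt xs \<in> A then 1 else 0)"
    unfolding good_def by (rule sum_mono) (rule incl)
  then have pA1: "good / real n^k \<le> (\<Sum>\<sigma>\<in>A. ?P \<sigma>)"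
    unfolding pAeq using npos by (simp add: divide_right_mono)
  have "good / real n^k = 1 - bad / real n^k" using gb npos by (simp add: field_simps)
  moreover have "bad / real n^k \<le> 4 / \<mu>" using b3 npos mpos by (simp add: field_simps)
  ultimately have pA2: "1 - 4/\<mu> \<le> (\<Sum>\<sigma>\<in>A. ?P \<sigma>)" using pA1 by linarith
  have cA: "real (card A) \<le> fact n / (\<mu>/2)"
    unfolding A_def by (rule markov[OF n1]) (use mpos in simp)
  have fpos: "(fact n :: real) > 0" by simp
  have uA1: "(\<Sum>\<sigma>\<in>A. ?U \<sigma>) \<le> 2 / \<mu>"
  proof -
    have "(\<Sum>\<sigma>\<in>A. ?U \<sigma>) = real (card A) / fact n" by (rule uA[OF AS])
    also have "\<dots> \<le> (fact n / (\<mu>/2)) / fact n" by (rule divide_right_mono[OF cA]) (use fpos in simp)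
    also have "\<dots> = 2 / \<mu>" using fpos mpos by (simp add: field_simps)
    finally show ?thesis .
  qed
  have dA: "1 - 6/\<mu> \<le> (\<Sum>\<sigma>\<in>A. ?P \<sigma>) - (\<Sum>\<sigma>\<in>A. ?U \<sigma>)"
    using pA2 uA1 by (simp add: diff_divide_distrib)
  have half: "1/2 \<le> 1 - 6/\<mu>" using mu12 mpos by (simp add: field_simps)
  define f where "f = (\<lambda>B. (\<Sum>x\<in>B. ?P x) - (\<Sum>x\<in>B. ?U x))"
  have tv_eq: "tv n ?P ?U = Sup (f ` Pow (Sym n))" unfolding tv_def f_def ..
  have bdd: "bdd_above (f ` Pow (Sym n))"
    by (rule bdd_above_finite) (simp add: finite_Sym)
  have tv_lo: "1 - 6/\<mu> \<le> tv n ?P ?U"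
    unfolding tv_eq by (rule cSUP_upper2[OF bdd, of A]) (use AS dA in \<open>auto simp: f_def\<close>)
  have tv_hi: "tv n ?P ?U \<le> 1"
    unfolding tv_eq
  proof (rule cSUP_least)
    show "Pow (Sym n) \<noteq> {}" by auto
  next
    fix B assume B: "B \<in> Pow (Sym n)"
    then have fB: "finite B" using finite_Sym finite_subset by blast
    have "(\<Sum>x\<in>B. ?U x) \<ge> 0" by (rule sum_nonneg) (simp add: unif_def)
    moreover have "(\<Sum>x\<in>B. ?P x) \<le> 1" by (rule pA_le1[OF n1 fB])
    ultimately show "f B \<le> 1" unfolding f_def by linarith
  qed
  have Ane: "A \<noteq> {}"
  proof
    assume "A = {}"
    then have "(\<Sum>\<sigma>\<in>A. ?P \<sigma>) = 0" by simp
    then show False using pA2 mu12 by (simp add: field_simps)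
  qed
  have cApos: "real (card A) > 0" using Ane finA by (simp add: card_gt_0_iff)
  define SA where "SA = (\<Sum>x\<in>A. (?P x - ?U x)^2)"
  have cs: "(\<Sum>x\<in>A. ?P x - ?U x)^2 \<le> SA * real (card A)"
    unfolding SA_def by (rule sum_squared_le_sum_of_squares)
  have "(\<Sum>x\<in>A. ?P x - ?U x) \<ge> 1/2" using dA half by (simp add: sum_subtractf)
  then have "(1/2)^2 \<le> (\<Sum>x\<in>A. ?P x - ?U x)^2" by (rule power_mono) simp
  then have X: "1/4 \<le> SA * real (card A)" using cs by (simp add: power2_eq_square)
  have Y: "\<mu> * real (card A) \<le> 2 * fact n" using cA mpos by (simp add: field_simps)
  have "(\<mu>/8) * real (card A) \<le> fact n / 4" using Y by simp
  also have "\<dots> \<le> fact n * (SA * real (card A))" using X fpos by simp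
  finally have "(\<mu>/8) * real (card A) \<le> (fact n * SA) * real (card A)" by (simp add: mult.assoc)
  then have Z: "\<mu>/8 \<le> fact n * SA" using cApos by (simp only: mult_le_cancel_right_pos)
  have "SA \<le> (\<Sum>x\<in>Sym n. \<bar>?P x - ?U x\<bar>^2)"
    unfolding SA_def power2_abs by (rule sum_mono2[OF finite_Sym AS]) simp
  then have h: "(fact n::real) * SA \<le> fact n * (\<Sum>x\<in>Sym n. \<bar>?P x - ?U x\<bar>^2)"
    using fpos by (intro mult_left_mono) auto
  then have "\<mu>/8 \<le> real (card (Sym n)) * (\<Sum>x\<in>Sym n. \<bar>?P x - ?U x\<bar>^2)"
    using Z unfolding card_Sym of_nat_fact by linarith
  then have d2_lo: "sqrt (\<mu>/8) \<le> d2 n ?P ?U"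
    unfolding d2_def by (rule real_sqrt_le_mono)
  show ?thesis using tv_lo tv_hi d2_lo by blast
qed

lemma mu_lower:
  fixes n k :: nat
  assumes n2: "n \<ge> 2" and kle: "real k \<le> real n * ln (real n)"
  shows "exp (- ((real k - real n * ln (real n)) / real n) - 3) \<le> real (n-1)^Suc k / real n^k"
proof -
  define x where "x = 1 / real n"
  have npos: "real n > 0" using n2 by simp
  have n2r: "real n \<ge> 2" using n2 by simp
  have x0: "0 \<le> x" unfolding x_def by simp
  have xh: "x \<le> 1/2" unfolding x_def using n2r by (simp add: field_simps)
  have nm1: "real (n-1) = real n - 1" using n2 by (simp add: of_nat_diff)
  have omx: "1 - x = (real n - 1) / real n" unfolding x_def using npos by (simp add: field_simps)
  have m1pos: "real n - 1 > 0" using n2r by simp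
  have pos1x: "1 - x > 0" using xh by simp
  have mu_eq: "real (n-1)^Suc k / real n^k = (real n - 1) * (1 - x)^k"
    unfolding omx nm1 by (simp add: power_divide)
  have ln_eq: "ln ((real n - 1) * (1 - x)^k) = ln (real n - 1) + real k * ln (1 - x)"
    using m1pos pos1x by (simp add: ln_mult ln_realpow)
  have l1: "- x - 2 * x^2 \<le> ln (1 - x)" by (rule ln_one_minus_pos_lower_bound[OF x0 xh])
  have l2: "real k * (- x - 2 * x^2) \<le> real k * ln (1 - x)"
    by (rule mult_left_mono[OF l1]) simp
  have kx: "real k * x = real k / real n" unfolding x_def by simp
  have kx2: "real k * x^2 \<le> 1"
  proof -
    have "real k * x^2 \<le> (real n * ln (real n)) * x^2" by (rule mult_right_mono[OF kle]) simp
    also have "\<dots> = ln (real n) / real n" unfolding x_def using npos by (simp add: power2_eq_square)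
    also have "\<dots> \<le> 1"
    proof -
      have "ln (real n) \<le> real n - 1" by (rule ln_le_minus_one[OF npos])
      then show ?thesis using npos by (simp add: pos_divide_le_eq)
    qed
    finally show ?thesis .
  qed
  have l3: "ln (real n) - 1 \<le> ln (real n - 1)"
  proof -
    have "ln (real n / 2) \<le> ln (real n - 1)"
      using npos n2r by (subst ln_le_cancel_iff) auto
    moreover have "ln (real n / 2) = ln (real n) - ln 2" using npos by (simp add: ln_div)
    ultimately show ?thesis using ln_2_less_1 by linarith
  qed
  have "- ((real k - real n * ln (real n)) / real n) - 3 = ln (real n) - real k / real n - 3"
    using npos by (simp add: field_simps)
  also have "\<dots> \<le> ln (real n - 1) + real k * ln (1 - x)"
    using l2 l3 kx kx2 by (simp add: algebra_simps)
  also have "\<dots> = ln (real (n-1)^Suc k / real n^k)"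
    unfolding mu_eq ln_eq ..
  finally have "exp (- ((real k - real n * ln (real n)) / real n) - 3) \<le> exp (ln (real (n-1)^Suc k / real n^k))"
    by simp
  also have "\<dots> = real (n-1)^Suc k / real n^k"
    using m1pos npos nm1 by (intro exp_ln) simp
  finally show ?thesis .
qed

theorem proposition3p2:
  fixes k :: "nat \<Rightarrow> nat"
  assumes "filterlim (\<lambda>n. (real (k n) - real n * ln (real n)) / real n) at_bot sequentially"
  shows "filterlim (\<lambda>n. d2 n (conv_pow n (ttr n) (k n)) (unif n)) at_top sequentially \<and>
         (\<lambda>n. tv n (conv_pow n (ttr n) (k n)) (unif n)) \<longlonglongrightarrow> 1"
proof -
  define \<mu> where "\<mu> n = real (n-1)^Suc (k n) / real n^(k n)" for n
  have ev_c: "\<forall>\<^sub>F n in sequentially. (real (k n) - real n * ln (real n)) / real n \<le> Z" for Z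
    using assms unfolding filterlim_at_bot by blast
  have mu_top: "filterlim \<mu> at_top sequentially"
    unfolding filterlim_at_top
  proof
    fix Z :: real
    have "\<forall>\<^sub>F n in sequentially. (real (k n) - real n * ln (real n)) / real n \<le> - (\<bar>Z\<bar> + 3) \<and> n \<ge> 2"
      using ev_c eventually_ge_at_top by (rule eventually_conj)
    then show "\<forall>\<^sub>F n in sequentially. Z \<le> \<mu> n"
    proof (rule eventually_mono)
      fix n assume h: "(real (k n) - real n * ln (real n)) / real n \<le> - (\<bar>Z\<bar> + 3) \<and> n \<ge> 2"
      then have n2: "n \<ge> 2" by simp
      have npos: "real n > 0" using n2 by simp
      have "(real (k n) - real n * ln (real n)) / real n \<le> 0" using h by linarith
      then have "real (k n) - real n * ln (real n) \<le> 0" using npos by (simp add: divide_le_0_iff)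
      then have kle: "real (k n) \<le> real n * ln (real n)" by simp
      have "Z \<le> 1 + \<bar>Z\<bar>" by simp
      also have "\<dots> \<le> exp \<bar>Z\<bar>" by (rule exp_ge_add_one_self)
      also have "\<dots> \<le> exp (- ((real (k n) - real n * ln (real n)) / real n) - 3)"
        using h by simp
      also have "\<dots> \<le> \<mu> n" unfolding \<mu>_def by (rule mu_lower[OF n2 kle])
      finally show "Z \<le> \<mu> n" .
    qed
  qed
  have ev_key: "\<forall>\<^sub>F n in sequentially. 1 - 6/\<mu> n \<le> tv n (conv_pow n (ttr n) (k n)) (unif n)
       \<and> tv n (conv_pow n (ttr n) (k n)) (unif n) \<le> 1
       \<and> sqrt (\<mu> n/8) \<le> d2 n (conv_pow n (ttr n) (k n)) (unif n)"
  proof -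
    have e1: "\<forall>\<^sub>F n in sequentially. 12 \<le> \<mu> n" using mu_top unfolding filterlim_at_top by blast
    have e2: "\<forall>\<^sub>F n in sequentially. n \<ge> (2::nat)" by (rule eventually_ge_at_top)
    have "\<forall>\<^sub>F n in sequentially. 12 \<le> \<mu> n \<and> n \<ge> 2"
      using e1 e2 by (rule eventually_conj)
    then show ?thesis
      by (rule eventually_mono) (use key in \<open>auto simp: \<mu>_def\<close>)
  qed
  have inv0: "((\<lambda>n. inverse (\<mu> n)) \<longlongrightarrow> 0) sequentially"
    by (rule tendsto_inverse_0_at_top[OF mu_top])
  have lo: "((\<lambda>n. 1 - 6/\<mu> n) \<longlongrightarrow> 1) sequentially"
  proof -
    have "((\<lambda>n. 1 - 6 * inverse (\<mu> n)) \<longlongrightarrow> 1 - 6 * 0) sequentially"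
      by (intro tendsto_intros inv0)
    then show ?thesis by (simp add: divide_inverse)
  qed
  have tv_lim: "(\<lambda>n. tv n (conv_pow n (ttr n) (k n)) (unif n)) \<longlonglongrightarrow> 1"
  proof (rule tendsto_sandwich[OF _ _ lo tendsto_const])
    show "\<forall>\<^sub>F n in sequentially. 1 - 6 / \<mu> n \<le> tv n (conv_pow n (ttr n) (k n)) (unif n)"
      using ev_key by (rule eventually_mono) blast
    show "\<forall>\<^sub>F n in sequentially. tv n (conv_pow n (ttr n) (k n)) (unif n) \<le> 1"
      using ev_key by (rule eventually_mono) blast
  qed
  have mu8: "filterlim (\<lambda>n. \<mu> n / 8) at_top sequentially"
    unfolding filterlim_at_top
  proof
    fix Z :: real
    have "\<forall>\<^sub>F n in sequentially. 8 * Z \<le> \<mu> n" using mu_top unfolding filterlim_at_top by blast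
    then show "\<forall>\<^sub>F n in sequentially. Z \<le> \<mu> n / 8" by (rule eventually_mono) simp
  qed
  have sq: "filterlim (\<lambda>n. sqrt (\<mu> n / 8)) at_top sequentially"
    by (rule filterlim_compose[OF sqrt_at_top mu8])
  have d2_lim: "filterlim (\<lambda>n. d2 n (conv_pow n (ttr n) (k n)) (unif n)) at_top sequentially"
    by (rule filterlim_at_top_mono[OF sq]) (use ev_key in \<open>rule eventually_mono; blast\<close>)
  show ?thesis using d2_lim tv_lim by blast
qed

end
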